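(* Let $A$ be a unique factorization domain and $R$ a subring of $A$ such that the group of units of $R$ equals that of $A$ and $R_0\cap A=R$, where $R_0$ is the field of fractions of $R$ inside that of $A$. If $R$ is square-factorially closed in $A$, then $R$ is root closed in $A$, i.e. for every $x\in A$ and $n\ge1$, $x^n\in R$ implies $x\in R$.
   Context: An element $a$ of a commutative ring $A$ is square-free if it cannot be written as $a=b^2c$ with $b,c\in A$ and $b$ not a unit; $\operatorname{Sqf}A$ denotes the set of square-free elements. A subring $R$ of a UFD $A$ is square-factorially closed in $A$ if for every $x\in A$ and $y\in\operatorname{Sqf}A$, $x^2y\in R\setminus\{0\}$ implies $x,y\in R$. *)

theory Defs
  imports "HOL-Computational_Algebra.Computational_Algebra"
begin

definition subring_set :: "'a::comm_ring_1 set \<Rightarrow> bool" where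
  "subring_set R \<longleftrightarrow> 0 \<in> R \<and> 1 \<in> R \<and>
     (\<forall>x\<in>R. \<forall>y\<in>R. x + y \<in> R \<and> x - y \<in> R \<and> x * y \<in> R)"

definition units_of_subring :: "'a::comm_ring_1 set \<Rightarrow> 'a set" where
  "units_of_subring R = {x \<in> R. \<exists>y\<in>R. x * y = 1}"

text \<open>Elements of A lying in the fraction field R0 of R (inside Frac A):
  x = a / b with a, b in R, b nonzero, i.e. b * x = a.\<close>
definition in_frac_field :: "'a::comm_ring_1 set \<Rightarrow> 'a \<Rightarrow> bool" where
  "in_frac_field R x \<longleftrightarrow> (\<exists>a\<in>R. \<exists>b\<in>R. b \<noteq> 0 \<and> b * x = a)"

definition sq_fact_closed :: "'a::comm_ring_1 set \<Rightarrow> bool" where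
  "sq_fact_closed R \<longleftrightarrow>
     (\<forall>x y. squarefree y \<longrightarrow> x ^ 2 * y \<in> R - {0} \<longrightarrow> x \<in> R \<and> y \<in> R)"

definition root_closed :: "'a::comm_ring_1 set \<Rightarrow> bool" where
  "root_closed R \<longleftrightarrow> (\<forall>x n. n \<ge> 1 \<longrightarrow> x ^ n \<in> R \<longrightarrow> x \<in> R)"

end

theory Submission
  imports Defs
begin

lemma subring_pow:
  assumes "subring_set R" "x \<in> R" shows "x ^ k \<in> R"
  using assms by (induction k) (auto simp: subring_set_def)

lemma size_pf_lt:
  fixes x :: "'a :: {idom, factorial_semiring}"
  assumes "x \<noteq> 0" "\<not> is_unit x"
  shows "size (prime_factorization (square_part x)) < size (prime_factorization x)"
proof -
  let ?d = "square_part x" and ?e = "squarefree_part x"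
  have d0: "?d \<noteq> 0" using assms by simp
  have "prime_factorization x = prime_factorization (?e * ?d ^ 2)"
    using squarefree_decompose[of x] by simp
  also have "\<dots> = prime_factorization ?e + prime_factorization (?d ^ 2)"
    by (rule prime_factorization_mult) (use d0 in simp_all)
  also have "prime_factorization (?d ^ 2) = prime_factorization ?d + prime_factorization ?d"
    unfolding power2_eq_square by (rule prime_factorization_mult) (use d0 in simp_all)
  finally have eq: "size (prime_factorization x) = size (prime_factorization ?e) + 2 * size (prime_factorization ?d)"
    by simp
  have "prime_factorization x \<noteq> {#}"
    using assms by (simp add: prime_factorization_empty_iff)
  hence "size (prime_factorization x) > 0" by (simp add: nonempty_has_size)
  thus ?thesis using eq by linarith
qed

lemma odd_case:
  fixes R :: "'a :: {idom, factorial_semiring} set"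
  assumes sub: "subring_set R"
    and un: "units_of_subring R = {x. is_unit x}"
    and fr: "{x. in_frac_field R x} = R"
    and sq: "sq_fact_closed R"
    and odd: "odd n"
  shows "x ^ n \<in> R \<Longrightarrow> x \<in> R"
proof (induction "size (prime_factorization x)" arbitrary: x rule: less_induct)
  case less
  show ?case
  proof (cases "x = 0")
    case True thus ?thesis using sub by (simp add: subring_set_def)
  next
    case x0: False
    show ?thesis
    proof (cases "is_unit x")
      case True thus ?thesis using un unfolding units_of_subring_def by blast
    next
      case nu: False
      define d where "d = square_part x"
      define e where "e = squarefree_part x"
      obtain m where n: "n = 2 * m + 1" using odd oddE by blast
      have xde: "x = e * d ^ 2" unfolding d_def e_def by (rule squarefree_decompose)
      have "x ^ n = (d ^ n * e ^ m) ^ 2 * e"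
        unfolding xde n by (simp add: power_mult_distrib power_mult[symmetric] power_add algebra_simps)
      moreover have "x ^ n \<noteq> 0" using x0 by simp
      ultimately have "(d ^ n * e ^ m) ^ 2 * e \<in> R - {0}" using less.prems by simp
      moreover have "squarefree e" unfolding e_def by simp
      ultimately have A: "d ^ n * e ^ m \<in> R" and B: "e \<in> R"
        using sq unfolding sq_fact_closed_def by blast+
      have em: "e ^ m \<in> R" using subring_pow[OF sub B] .
      have "e ^ m \<noteq> 0" unfolding e_def by simp
      hence "in_frac_field R (d ^ n)" unfolding in_frac_field_def
        using A em by (intro bexI[of _ "d ^ n * e ^ m"] bexI[of _ "e ^ m"]) (auto simp: mult.commute)
      hence dn: "d ^ n \<in> R" using fr by blast
      have "d \<in> R"
        using less.hyps[OF _ dn] size_pf_lt[OF x0 nu] unfolding d_def by blast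
      hence "d ^ 2 \<in> R" using subring_pow[OF sub] by blast
      thus ?thesis using B sub xde by (simp add: subring_set_def)
    qed
  qed
qed

theorem theorem3p5:
  fixes R :: "'a :: {idom, factorial_semiring} set"
  assumes "subring_set R"
    and "units_of_subring R = {x. is_unit x}"
    and "{x. in_frac_field R x} = R"
    and "sq_fact_closed R"
  shows "root_closed R"
  unfolding root_closed_def
proof (intro allI impI)
  fix x :: 'a and n :: nat
  assume "n \<ge> 1" "x ^ n \<in> R"
  thus "x \<in> R"
  proof (induction n rule: less_induct)
    case (less n)
    show ?case
    proof (cases "odd n")
      case True thus ?thesis using odd_case[OF assms True] less.prems by blast
    next
      case False
      then obtain m where n: "n = 2 * m" by blast
      with less.prems have m1: "m \<ge> 1" by simp
      show ?thesis
      proof (cases "x = 0")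
        case True thus ?thesis using assms(1) by (simp add: subring_set_def)
      next
        case False
        have "(x ^ m) ^ 2 * 1 \<in> R - {0}"
          using less.prems False by (simp add: n power_mult[symmetric] mult.commute)
        hence "x ^ m \<in> R" using assms(4) squarefree_1 unfolding sq_fact_closed_def by blast
        thus ?thesis using less.IH[of m] m1 n by simp
      qed
    qed
  qed
qed

end
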